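(* If $\mathcal C_1$ and $\mathcal C_2$ are Baker classes, then $\mathcal C_1\oplus\mathcal C_2$ is a Baker class.
   Context: A layering of a graph $G$ is a function $\lambda:V(G)\to\mathbb{Z}$ with $|\lambda(u)-\lambda(v)|\le1$ for every edge $uv$. An ordered graph is a finite graph with a linear ordering of its vertices; subgraphs inherit the restricted ordering. For an infinite sequence $\mathbf r=r_1,r_2,\dots$ of positive integers and an integer $s\ge0$, let $\mathrm{tail}_s(\mathbf r)=r_{s+1},r_{s+2},\dots$, $\mathrm{tail}(\mathbf r)=\mathrm{tail}_1(\mathbf r)$ and $\mathrm{head}(\mathbf r)=r_1$. The Baker game between Destroyer and Preserver has states $(G,\mathbf r)$ with $G$ an ordered graph and $\mathbf r$ an infinite sequence of positive integers. If $V(G)=\emptyset$ the game stops. Otherwise, in one round Destroyer chooses either Delete (the smallest vertex $v$ of $G$ is removed and the game proceeds to $(G-v,\mathrm{tail}(\mathbf r))$) or Restrict (Destroyer chooses a layering $\lambda$ of $G$, Preserver chooses an interval $I$ of at most $\mathrm{head}(\mathbf r)$ consecutive integers, and the game proceeds to $(G[\lambda^{-1}(I)],\mathrm{tail}(\mathbf r))$). Destroyer wins on $(G,\mathbf r)$ in $t$ rounds if he has a strategy such that, regardless of Preserver's choices, the game stops after at most $t$ rounds. A class $\mathcal C$ of ordered graphs is a Baker class if for every infinite sequence $\mathbf r$ of positive integers there is an integer $t$ such that for every $G\in\mathcal C$, Destroyer wins the Baker game on $(G,\mathbf r)$ in $t$ rounds. For classes $\mathcal C_1,\mathcal C_2$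 of ordered graphs, $\mathcal C_1\oplus\mathcal C_2$ is the class of ordered graphs $G$ for which there exists a set $B\subseteq V(G)$ (a base) such that $G[B]\in\mathcal C_1$ and, for each component $C$ of $G-B$: $G[C]\in\mathcal C_2$, the set $K_C$ of vertices of $B$ having a neighbor in $C$ induces a clique, and every vertex of $K_C$ is smaller than every vertex of $C$. *)

theory Defs
  imports Main
begin

text \<open>An ordered graph: a finite vertex set with the order inherited from the
linearly ordered vertex type, and a set of edges, each a 2-element subset of the
vertex set.\<close>

type_synonym 'a ograph = "'a set \<times> 'a set set"

definition verts :: "'a ograph \<Rightarrow> 'a set" where "verts G = fst G"
definition edges :: "'a ograph \<Rightarrow> 'a set set" where "edges G = snd G"

definition ordered_graph :: "('a::linorder) ograph \<Rightarrow> bool" where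
  "ordered_graph G \<longleftrightarrow> finite (verts G) \<and>
     (\<forall>e\<in>edges G. \<exists>u v. u \<in> verts G \<and> v \<in> verts G \<and> u \<noteq> v \<and> e = {u, v})"

definition induce :: "'a ograph \<Rightarrow> 'a set \<Rightarrow> 'a ograph" where
  "induce G S = (verts G \<inter> S, {e \<in> edges G. e \<subseteq> S})"

definition layering :: "'a ograph \<Rightarrow> ('a \<Rightarrow> int) \<Rightarrow> bool" where
  "layering G lam \<longleftrightarrow> (\<forall>u v. {u, v} \<in> edges G \<longrightarrow> \<bar>lam u - lam v\<bar> \<le> 1)"

definition tail :: "(nat \<Rightarrow> nat) \<Rightarrow> (nat \<Rightarrow> nat)" where
  "tail r = (\<lambda>i. r (Suc i))"

definition head :: "(nat \<Rightarrow> nat) \<Rightarrow> nat" where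
  "head r = r 0"

definition delete_min :: "('a::linorder) ograph \<Rightarrow> 'a ograph" where
  "delete_min G = induce G (- {Min (verts G)})"

text \<open>Preserver's interval is \<open>{a..<a + m}\<close> with \<open>m \<le> head r\<close> consecutive integers.\<close>
primrec destroyer_wins :: "('a::linorder) ograph \<Rightarrow> (nat \<Rightarrow> nat) \<Rightarrow> nat \<Rightarrow> bool" where
  "destroyer_wins G r 0 \<longleftrightarrow> verts G = {}"
| "destroyer_wins G r (Suc t) \<longleftrightarrow> verts G = {} \<or>
     destroyer_wins (delete_min G) (tail r) t \<or>
     (\<exists>lam. layering G lam \<and>
        (\<forall>(a::int) (m::nat). m \<le> head r \<longrightarrow>
           destroyer_wins (induce G (lam -` {a..<a + int m})) (tail r) t))"

definition baker_class :: "('a::linorder) ograph set \<Rightarrow> bool" where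
  "baker_class C \<longleftrightarrow> (\<forall>r::nat \<Rightarrow> nat. (\<forall>i. 0 < r i) \<longrightarrow>
      (\<exists>t. \<forall>G\<in>C. destroyer_wins G r t))"

definition adj_in :: "'a ograph \<Rightarrow> 'a set \<Rightarrow> 'a \<Rightarrow> 'a \<Rightarrow> bool" where
  "adj_in G S x y \<longleftrightarrow> x \<in> S \<and> y \<in> S \<and> {x, y} \<in> edges G"

definition components_in :: "'a ograph \<Rightarrow> 'a set \<Rightarrow> 'a set set" where
  "components_in G S = {C. \<exists>v\<in>S. C = {w. (adj_in G S)\<^sup>*\<^sup>* v w}}"

definition is_clique :: "'a ograph \<Rightarrow> 'a set \<Rightarrow> bool" where
  "is_clique G K \<longleftrightarrow> (\<forall>x\<in>K. \<forall>y\<in>K. x \<noteq> y \<longrightarrow> {x, y} \<in> edges G)"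

definition attach :: "'a ograph \<Rightarrow> 'a set \<Rightarrow> 'a set \<Rightarrow> 'a set" where
  "attach G B C = {b\<in>B. \<exists>c\<in>C. {b, c} \<in> edges G}"

definition oplus :: "('a::linorder) ograph set \<Rightarrow> 'a ograph set \<Rightarrow> 'a ograph set" where
  "oplus C1 C2 = {G. ordered_graph G \<and> (\<exists>B. B \<subseteq> verts G \<and> induce G B \<in> C1 \<and>
      (\<forall>C\<in>components_in G (verts G - B).
          induce G C \<in> C2 \<and> is_clique G (attach G B C) \<and>
          (\<forall>x\<in>attach G B C. \<forall>y\<in>C. x < y)))}"

end

theory Submission
  imports Defs
begin

lemma verts_induce[simp]: "verts (induce G X) = verts G \<inter> X"
  by (simp add: induce_def verts_def)
lemma edges_induce[simp]: "edges (induce G X) = {e\<in>edges G. e \<subseteq> X}"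
  by (simp add: induce_def edges_def)
lemma induce_induce: "induce (induce G X) Y = induce G (X \<inter> Y)"
  by (auto simp: induce_def verts_def edges_def)
lemma induce_UNIV: "induce G UNIV = G"
  by (simp add: induce_def verts_def edges_def)

lemma og_edge:
  assumes "ordered_graph G" "e \<in> edges G" shows "e \<subseteq> verts G"
proof -
  obtain u v where "u \<in> verts G" "v \<in> verts G" "e = {u,v}"
    using assms unfolding ordered_graph_def by meson
  then show ?thesis by simp
qed
lemma og_edge2: "ordered_graph G \<Longrightarrow> {u,v} \<in> edges G \<Longrightarrow> u \<in> verts G \<and> v \<in> verts G"
  using og_edge[of G "{u,v}"] by simp

lemma induce_cong: "ordered_graph G \<Longrightarrow> X \<inter> verts G = Y \<inter> verts G \<Longrightarrow> induce G X = induce G Y"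
  unfolding induce_def using og_edge[of G] by (simp; blast)

lemma dw_empty: "verts G = {} \<Longrightarrow> destroyer_wins G r t"
  by (cases t) auto

lemma dw_mono: "destroyer_wins G r t \<Longrightarrow> t \<le> t' \<Longrightarrow> destroyer_wins G r t'"
proof (induction t arbitrary: G r t')
  case 0 then show ?case by (simp add: dw_empty)
next
  case (Suc t)
  then obtain t'' where t': "t' = Suc t''" and "t \<le> t''" by (cases t') auto
  have IH: "destroyer_wins H q t''" if "destroyer_wins H q t" for H :: "('a::linorder) ograph" and q
    using Suc.IH[OF that \<open>t \<le> t''\<close>] .
  show ?case using Suc.prems(1) unfolding t' destroyer_wins.simps
    by (metis IH)
qed

definition comp :: "('a::linorder) ograph \<Rightarrow> 'a set \<Rightarrow> 'a \<Rightarrow> 'a set" where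
  "comp G B x = {w. (adj_in G (verts G - B))\<^sup>*\<^sup>* x w}"

lemma comp_refl: "x \<in> comp G B x" by (simp add: comp_def)

lemma adj_sym: "symp (adj_in G X)"
  unfolding symp_def adj_in_def by (simp add: insert_commute)

lemma comp_eq: "y \<in> comp G B x \<Longrightarrow> comp G B y = comp G B x"
proof -
  let ?R = "adj_in G (verts G - B)"
  assume "y \<in> comp G B x"
  then have xy: "?R\<^sup>*\<^sup>* x y" by (simp add: comp_def)
  then have yx: "?R\<^sup>*\<^sup>* y x" using symp_rtranclp[OF adj_sym] by (metis sympD)
  show ?thesis unfolding comp_def using xy yx by (auto intro: rtranclp_trans)
qed

lemma comp_sub: "x \<in> verts G - B \<Longrightarrow> comp G B x \<subseteq> verts G - B"
proof
  fix y assume x: "x \<in> verts G - B" and "y \<in> comp G B x"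
  then have "(adj_in G (verts G - B))\<^sup>*\<^sup>* x y" by (simp add: comp_def)
  then show "y \<in> verts G - B" using x
    by (induction rule: rtranclp_induct) (auto simp: adj_in_def)
qed

lemma comp_edge: "ordered_graph G \<Longrightarrow> {u,v} \<in> edges G \<Longrightarrow> u \<notin> B \<Longrightarrow> v \<notin> B \<Longrightarrow> comp G B u = comp G B v"
proof -
  assume og: "ordered_graph G" and e: "{u,v} \<in> edges G" "u \<notin> B" "v \<notin> B"
  then have "adj_in G (verts G - B) u v" using og_edge2[OF og e(1)] by (simp add: adj_in_def)
  then have "v \<in> comp G B u" by (simp add: comp_def)
  then show ?thesis using comp_eq by metis
qed

lemma comp_in: "x \<in> verts G - B \<Longrightarrow> comp G B x \<in> components_in G (verts G - B)"
  unfolding components_in_def comp_def by blast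


definition attd :: "('a::linorder) ograph \<Rightarrow> 'a set \<Rightarrow> 'a set \<Rightarrow> 'a \<Rightarrow> bool" where
  "attd G B S x \<longleftrightarrow> (\<exists>b\<in>S \<inter> B. \<exists>c\<in>comp G B x. {b,c} \<in> edges G)"

definition SZ :: "('a::linorder) ograph \<Rightarrow> 'a set \<Rightarrow> 'a set \<Rightarrow> 'a set" where
  "SZ G B S = {x\<in>S. x \<in> B \<or> attd G B S x}"

lemma int_arith_aux:
  fixes p q h a m :: int
  assumes "a \<le> p*h" "p*h < a+m" "a \<le> q*h" "q*h < a + m" "m < h" "0 < h"
  shows "p = q"
proof (rule ccontr)
  assume "p \<noteq> q"
  then consider "p + 1 \<le> q" | "q + 1 \<le> p" by linarith
  then show False
  proof cases
    case 1
    then have "(p+1)*h \<le> q*h" using assms(6) by (simp add: mult_right_mono)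
    then show False using assms by (simp add: distrib_right)
  next
    case 2
    then have "(q+1)*h \<le> p*h" using assms(6) by (simp add: mult_right_mono)
    then show False using assms by (simp add: distrib_right)
  qed
qed

locale BG =
  fixes G :: "('a::linorder) ograph" and B :: "'a set"
  assumes og: "ordered_graph G"
  and cl: "\<And>x. x \<in> verts G - B \<Longrightarrow> is_clique G (attach G B (comp G B x))"
  and lt: "\<And>x a y. x \<in> verts G - B \<Longrightarrow> a \<in> attach G B (comp G B x) \<Longrightarrow> y \<in> comp G B x \<Longrightarrow> a < y"
begin

lemma attd_comp: "y \<in> comp G B x \<Longrightarrow> attd G B S y = attd G B S x"
  unfolding attd_def using comp_eq by metis

lemma fin: "finite (verts G)" using og by (simp add: ordered_graph_def)

lemma isolate:
  assumes closed: "\<And>x. x \<in> S \<Longrightarrow> x \<in> verts G - B \<Longrightarrow> comp G B x \<subseteq> S"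
  and h0: "destroyer_wins (induce G (SZ G B S)) (tail r) M"
  and hC: "\<And>x. x \<in> verts G - B \<Longrightarrow> destroyer_wins (induce G (comp G B x)) (tail r) M"
  shows "destroyer_wins (induce G S) r (Suc M)"
proof -
  let ?V = "verts G"
  let ?Cs = "comp G B ` (?V - B)"
  have finC: "finite ?Cs" using fin by simp
  obtain idx :: "'a set \<Rightarrow> nat" where inj: "inj_on idx ?Cs"
    using finite_imp_inj_to_nat_seg[OF finC] by blast
  define h where "h = int (head r) + 1"
  have hpos: "0 < h" by (simp add: h_def)
  define mu where "mu x = (if x \<in> B \<or> attd G B S x then 0 else (int (idx (comp G B x)) + 1) * h)" for x
  have mu_comp: "mu y = mu x" if "x \<in> ?V - B" "y \<in> comp G B x" for x y
  proof -
    have "y \<notin> B" using comp_sub[OF that(1)] that(2) by blast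
    moreover have "comp G B y = comp G B x" using comp_eq[OF that(2)] .
    moreover have "attd G B S y = attd G B S x" using attd_comp[OF that(2)] .
    ultimately show ?thesis using that(1) by (simp add: mu_def)
  qed
  have mu_big: "mu x \<ge> h" if "\<not> (x \<in> B \<or> attd G B S x)" for x
  proof -
    have "(int (idx (comp G B x)) + 1) * h \<ge> 1 * h" using hpos
      by (intro mult_right_mono) auto
    then show ?thesis using that by (simp add: mu_def)
  qed
  have lay: "layering (induce G S) mu"
    unfolding layering_def
  proof (intro allI impI)
    fix u v assume "{u, v} \<in> edges (induce G S)"
    then have e: "{u,v} \<in> edges G" and uS: "u \<in> S" and vS: "v \<in> S" by auto
    have uv: "u \<in> ?V" "v \<in> ?V" using og_edge2[OF og e] by auto
    show "\<bar>mu u - mu v\<bar> \<le> 1"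
    proof (cases "u \<in> B")
      case True
      then have mu0: "mu u = 0" by (simp add: mu_def)
      show ?thesis
      proof (cases "v \<in> B")
        case True then show ?thesis using mu0 by (simp add: mu_def)
      next
        case False
        have "attd G B S v" unfolding attd_def using True uS e comp_refl by blast
        then show ?thesis using mu0 by (simp add: mu_def)
      qed
    next
      case False
      note uB = False
      show ?thesis
      proof (cases "v \<in> B")
        case True
        have e': "{v,u} \<in> edges G" using e by (simp add: insert_commute)
        have "attd G B S u" unfolding attd_def using True vS e' comp_refl by blast
        then show ?thesis using True by (simp add: mu_def)
      next
        case False
        have "comp G B u = comp G B v" using comp_edge[OF og e uB False] .
        then have "v \<in> comp G B u" using comp_refl by metis
        then have "mu v = mu u" using mu_comp uv uB by blast
        then show ?thesis by simp
      qed
    qed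
  qed
  have rest: "destroyer_wins (induce (induce G S) (mu -` {a..<a + int m})) (tail r) M"
    if m: "m \<le> head r" for a m
  proof -
    let ?I = "{a..<a + int m}"
    have mh: "int m < h" using m by (simp add: h_def)
    have eq: "induce (induce G S) (mu -` ?I) = induce G (S \<inter> mu -` ?I)" by (simp add: induce_induce)
    show ?thesis
    proof (cases "0 \<in> ?I")
      case True
      have "S \<inter> mu -` ?I = SZ G B S"
      proof (intro set_eqI iffI)
        fix x assume x: "x \<in> S \<inter> mu -` ?I"
        show "x \<in> SZ G B S"
        proof (rule ccontr)
          assume "x \<notin> SZ G B S"
          then have "\<not> (x \<in> B \<or> attd G B S x)" using x by (simp add: SZ_def)
          then have "mu x \<ge> h" by (rule mu_big)
          then show False using x True mh by auto
        qed
      next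
        fix x assume "x \<in> SZ G B S"
        then show "x \<in> S \<inter> mu -` ?I" using True by (auto simp: SZ_def mu_def)
      qed
      then show ?thesis using eq h0 by simp
    next
      case False
      note I0 = False
      show ?thesis
      proof (cases "?V \<inter> (S \<inter> mu -` ?I) = {}")
        case True then show ?thesis using eq by (simp add: dw_empty)
      next
        case False
        then obtain x where x: "x \<in> ?V" "x \<in> S" "mu x \<in> ?I" by blast
        have nx: "\<not> (x \<in> B \<or> attd G B S x)" using x I0 by (auto simp: mu_def)
        have xVB: "x \<in> ?V - B" using x nx by auto
        have "(S \<inter> mu -` ?I) \<inter> ?V = comp G B x \<inter> ?V"
        proof (intro set_eqI iffI)
          fix y assume y: "y \<in> (S \<inter> mu -` ?I) \<inter> ?V"
          have ny: "\<not> (y \<in> B \<or> attd G B S y)" using y I0 by (auto simp: mu_def)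
          have yVB: "y \<in> ?V - B" using y ny by auto
          have "(int (idx (comp G B y)) + 1) = (int (idx (comp G B x)) + 1)"
            apply (rule int_arith_aux[where h = h and a = a and m = "int m"])
            using x(3) y ny nx mh hpos by (auto simp: mu_def)
          then have "idx (comp G B y) = idx (comp G B x)" by simp
          then have "comp G B y = comp G B x" using inj xVB yVB by (auto dest: inj_onD)
          then show "y \<in> comp G B x \<inter> ?V" using comp_refl[of y G B] y by auto
        next
          fix y assume y: "y \<in> comp G B x \<inter> ?V"
          have "y \<in> S" using closed[OF x(2) xVB] y by blast
          moreover have "mu y = mu x" using mu_comp xVB y by blast
          ultimately show "y \<in> (S \<inter> mu -` ?I) \<inter> ?V" using x(3) y by simp
        qed
        then have "induce G (S \<inter> mu -` ?I) = induce G (comp G B x)"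
          by (rule induce_cong[OF og])
        then show ?thesis using eq hC[OF xVB] by simp
      qed
    qed
  qed
  show ?thesis unfolding destroyer_wins.simps(2) using lay rest by blast
qed


lemma ext_layering:
  assumes lB: "layering (induce G (S \<inter> B)) lamB"
  shows "layering (induce G S)
    (\<lambda>x. if x \<in> B then lamB x else lamB (SOME b. b \<in> S \<inter> B \<and> (\<exists>c\<in>comp G B x. {b,c} \<in> edges G)))"
    (is "layering _ ?lam")
  unfolding layering_def
proof (intro allI impI)
  have key: "\<bar>?lam u - ?lam v\<bar> \<le> 1" if e: "{u,v} \<in> edges G" and uS: "u \<in> S" and vS: "v \<in> S"
    and uB: "u \<in> B" and vB: "v \<notin> B" for u v
  proof -
    let ?P = "\<lambda>b. b \<in> S \<inter> B \<and> (\<exists>c\<in>comp G B v. {b,c} \<in> edges G)"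
    have Pu: "?P u" using uS uB e comp_refl by blast
    define b0 where "b0 = (SOME b. ?P b)"
    have Pb0: "?P b0" unfolding b0_def using someI[of ?P, OF Pu] .
    have vVB: "v \<in> verts G - B" using og_edge2[OF og e] vB by auto
    have au: "u \<in> attach G B (comp G B v)" unfolding attach_def using Pu by blast
    have ab: "b0 \<in> attach G B (comp G B v)" unfolding attach_def using Pb0 by blast
    have "\<bar>lamB u - lamB b0\<bar> \<le> 1"
    proof (cases "u = b0")
      case True then show ?thesis by simp
    next
      case False
      then have "{u,b0} \<in> edges G" using cl[OF vVB] au ab unfolding is_clique_def by blast
      then have "{u,b0} \<in> edges (induce G (S \<inter> B))" using Pu Pb0 by auto
      then show ?thesis using lB unfolding layering_def by blast
    qed
    then show ?thesis using uB vB by (simp add: b0_def)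
  qed
  fix u v assume "{u, v} \<in> edges (induce G S)"
  then have e: "{u,v} \<in> edges G" and uS: "u \<in> S" and vS: "v \<in> S" by auto
  have e': "{v,u} \<in> edges G" using e by (simp add: insert_commute)
  show "\<bar>?lam u - ?lam v\<bar> \<le> 1"
  proof (cases "u \<in> B")
    case True
    show ?thesis
    proof (cases "v \<in> B")
      case True
      have "{u,v} \<in> edges (induce G (S \<inter> B))" using e uS vS \<open>u \<in> B\<close> True by auto
      then show ?thesis using lB \<open>u \<in> B\<close> True unfolding layering_def by simp
    next
      case False then show ?thesis using key[OF e uS vS True] by simp
    qed
  next
    case False
    show ?thesis
    proof (cases "v \<in> B")
      case True then show ?thesis using key[OF e' vS uS True False] by linarith
    next
      case vB: False
      have "comp G B u = comp G B v" using comp_edge[OF og e False vB] .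
      then show ?thesis using False vB by simp
    qed
  qed
qed


lemma SZ_closed:
  assumes closed: "\<And>x. x \<in> S \<Longrightarrow> x \<in> verts G - B \<Longrightarrow> comp G B x \<subseteq> S"
  and x: "x \<in> SZ G B S" "x \<in> verts G - B"
  shows "comp G B x \<subseteq> SZ G B S"
proof
  fix y assume y: "y \<in> comp G B x"
  have xS: "x \<in> S" using x by (simp add: SZ_def)
  have "y \<in> S" using closed[OF xS x(2)] y by blast
  moreover have "attd G B S x" using x by (simp add: SZ_def)
  then have "attd G B S y" using attd_comp[OF y] by simp
  ultimately show "y \<in> SZ G B S" by (simp add: SZ_def)
qed

lemma SZ_B: "SZ G B S \<inter> B = S \<inter> B" by (auto simp: SZ_def)

lemma SZ_empty: "verts G \<inter> (S \<inter> B) = {} \<Longrightarrow> verts G \<inter> SZ G B S = {}"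
  unfolding SZ_def attd_def using og_edge2[OF og] by blast

lemma SZ_min:
  assumes ne: "verts G \<inter> SZ G B S \<noteq> {}"
  shows "Min (verts G \<inter> SZ G B S) \<in> B"
proof (rule ccontr)
  let ?m = "Min (verts G \<inter> SZ G B S)"
  have finA: "finite (verts G \<inter> SZ G B S)" using fin by simp
  have m: "?m \<in> verts G \<inter> SZ G B S" using Min_in[OF finA ne] .
  assume mB: "?m \<notin> B"
  then have "attd G B S ?m" using m by (simp add: SZ_def)
  then obtain b c where b: "b \<in> S" "b \<in> B" "c \<in> comp G B ?m" "{b,c} \<in> edges G"
    unfolding attd_def by blast
  have mVB: "?m \<in> verts G - B" using m mB by simp
  have "b \<in> attach G B (comp G B ?m)" unfolding attach_def using b by blast
  then have "b < ?m" using lt[OF mVB] comp_refl by blast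
  moreover have "b \<in> verts G \<inter> SZ G B S" using b og_edge2[OF og b(4)] by (simp add: SZ_def)
  then have "?m \<le> b" using Min_le[OF finA] by blast
  ultimately show False by simp
qed

lemma tail_shift: "tail r = (\<lambda>i. r (i + 1))" by (simp add: tail_def)

lemma main:
  "(\<And>x. x \<in> S \<Longrightarrow> x \<in> verts G - B \<Longrightarrow> comp G B x \<subseteq> S) \<Longrightarrow>
   destroyer_wins (induce G (S \<inter> B)) (\<lambda>j. r (2*j+1)) t1 \<Longrightarrow>
   (\<And>k x. k \<le> 2*t1+1 \<Longrightarrow> x \<in> verts G - B \<Longrightarrow>
       destroyer_wins (induce G (comp G B x)) (\<lambda>i. r (i+k)) N) \<Longrightarrow>
   destroyer_wins (induce G S) r (2*t1+1+N)"
proof (induction t1 arbitrary: S r)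
  case 0
  have e: "verts G \<inter> (S \<inter> B) = {}" using "0.prems"(2) by simp
  have h0: "destroyer_wins (induce G (SZ G B S)) (tail r) N"
    using SZ_empty[OF e] by (simp add: dw_empty)
  have hC: "destroyer_wins (induce G (comp G B x)) (tail r) N" if "x \<in> verts G - B" for x
    using "0.prems"(3)[of 1 x] that by (simp add: tail_shift)
  show ?case using isolate[OF "0.prems"(1) h0 hC] by simp
next
  case (Suc t)
  let ?S' = "SZ G B S"
  let ?r1 = "\<lambda>j. r (2*j+1)"
  have closed: "\<And>x. x \<in> S \<Longrightarrow> x \<in> verts G - B \<Longrightarrow> comp G B x \<subseteq> S" by (rule Suc.prems(1))
  have tot: "2 * Suc t + 1 + N = Suc (Suc (2*t+1+N))" by simp
  have C2': "destroyer_wins (induce G (comp G B x)) (\<lambda>i. tail (tail r) (i+k)) N"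
    if "k \<le> 2*t+1" "x \<in> verts G - B" for k x
  proof -
    have "(\<lambda>i. tail (tail r) (i+k)) = (\<lambda>i. r (i+(k+2)))" by (simp add: tail_def)
    then show ?thesis using Suc.prems(3)[of "k+2" x] that by simp
  qed
  have r1eq: "(\<lambda>j. tail (tail r) (2*j+1)) = tail ?r1" by (simp add: tail_def)
  have hC: "destroyer_wins (induce G (comp G B x)) (tail r) (Suc (2*t+1+N))"
    if "x \<in> verts G - B" for x
  proof -
    have a: "destroyer_wins (induce G (comp G B x)) (tail r) N"
      using Suc.prems(3)[of 1 x] that by (simp add: tail_shift)
    show ?thesis by (rule dw_mono[OF a]) simp
  qed
  have h0: "destroyer_wins (induce G ?S') (tail r) (Suc (2*t+1+N))"
  proof (cases "verts G \<inter> ?S' = {}")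
    case True then show ?thesis by (simp add: dw_empty)
  next
    case False
    note ne = False
    have sig: "destroyer_wins (induce G (S \<inter> B)) ?r1 (Suc t)" by (rule Suc.prems(2))
    then consider (E) "verts G \<inter> (S \<inter> B) = {}"
      | (D) "destroyer_wins (delete_min (induce G (S \<inter> B))) (tail ?r1) t"
      | (R) lamB where "layering (induce G (S \<inter> B)) lamB"
          "\<forall>(a::int) (m::nat). m \<le> head ?r1 \<longrightarrow>
             destroyer_wins (induce (induce G (S \<inter> B)) (lamB -` {a..<a + int m})) (tail ?r1) t"
      unfolding destroyer_wins.simps(2) by auto
    then show ?thesis
    proof cases
      case E then show ?thesis using SZ_empty ne by blast
    next
      case D
      let ?m = "Min (verts G \<inter> ?S')"
      have finA: "finite (verts G \<inter> ?S')" using fin by simp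
      have mB: "?m \<in> B" using SZ_min[OF ne] .
      have mA: "?m \<in> verts G \<inter> ?S'" using Min_in[OF finA ne] .
      have minB: "Min (verts G \<inter> (S \<inter> B)) = ?m"
      proof (rule Min_eqI)
        show "finite (verts G \<inter> (S \<inter> B))" using fin by simp
        show "?m \<in> verts G \<inter> (S \<inter> B)" using mA mB SZ_B[of S] by blast
        fix y assume "y \<in> verts G \<inter> (S \<inter> B)"
        then have "y \<in> verts G \<inter> ?S'" using SZ_B[of S] by blast
        then show "?m \<le> y" using Min_le[OF finA] by blast
      qed
      have d1: "delete_min (induce G (S \<inter> B)) = induce G ((S' \<inter> - {?m}) \<inter> B)" if "S' = ?S'" for S'
        unfolding delete_min_def induce_induce verts_induce minB using that SZ_B[of S]
        by (metis Int_assoc Int_commute)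
      have d2: "delete_min (induce G ?S') = induce G (?S' \<inter> - {?m})"
        unfolding delete_min_def induce_induce verts_induce by simp
      have cl': "comp G B x \<subseteq> ?S' \<inter> - {?m}" if "x \<in> ?S' \<inter> - {?m}" "x \<in> verts G - B" for x
        using SZ_closed[OF closed _ that(2)] that comp_sub[OF that(2)] mB by blast
      have "destroyer_wins (induce G (?S' \<inter> - {?m})) (tail (tail r)) (2*t+1+N)"
        apply (rule Suc.IH)
        using cl' apply blast
        using D d1 r1eq apply simp
        using C2' by blast
      then show ?thesis unfolding destroyer_wins.simps(2) d2 by blast
    next
      case R
      define lam where "lam x = (if x \<in> B then lamB x else
          lamB (SOME b. b \<in> ?S' \<inter> B \<and> (\<exists>c\<in>comp G B x. {b,c} \<in> edges G)))" for x
      have lB: "layering (induce G (?S' \<inter> B)) lamB" using R(1) SZ_B[of S] by simp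
      have lay: "layering (induce G ?S') lam"
        using ext_layering[OF lB] unfolding lam_def .
      have lam_comp: "lam y = lam x" if "x \<in> verts G - B" "y \<in> comp G B x" for x y
      proof -
        have "y \<notin> B" using comp_sub[OF that(1)] that(2) by blast
        moreover have "comp G B y = comp G B x" using comp_eq[OF that(2)] .
        ultimately show ?thesis using that(1) by (simp add: lam_def)
      qed
      have rest: "destroyer_wins (induce (induce G ?S') (lam -` {a..<a + int m})) (tail (tail r)) (2*t+1+N)"
        if m: "m \<le> head (tail r)" for a m
      proof -
        let ?I = "{a..<a + int m}"
        have m1: "m \<le> head ?r1" using m by (simp add: head_def tail_def)
        have sB: "(?S' \<inter> lam -` ?I) \<inter> B = (S \<inter> B) \<inter> lamB -` ?I"
          using SZ_B[of S] by (auto simp: lam_def)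
        have cl': "comp G B x \<subseteq> ?S' \<inter> lam -` ?I" if "x \<in> ?S' \<inter> lam -` ?I" "x \<in> verts G - B" for x
          using SZ_closed[OF closed _ that(2)] that lam_comp[OF that(2)] by blast
        have "destroyer_wins (induce G (?S' \<inter> lam -` ?I)) (tail (tail r)) (2*t+1+N)"
          apply (rule Suc.IH)
          using cl' apply blast
          using R(2) m1 sB r1eq apply (simp add: induce_induce)
          using C2' by blast
        then show ?thesis by (simp add: induce_induce)
      qed
      show ?thesis unfolding destroyer_wins.simps(2) using lay rest by blast
    qed
  qed
  show ?case unfolding tot using isolate[OF closed h0 hC] .
qed

end

theorem mainTheorem6:
  fixes C1 C2 :: "('a::linorder) ograph set"
  assumes "\<forall>G\<in>C1. ordered_graph G" and "\<forall>G\<in>C2. ordered_graph G"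
    and "baker_class C1" and "baker_class C2"
  shows "baker_class (oplus C1 C2)"
  unfolding baker_class_def
proof (intro allI impI)
  fix r :: "nat \<Rightarrow> nat" assume rpos: "\<forall>i. 0 < r i"
  define r1 where "r1 = (\<lambda>j. r (2*j+1))"
  have "\<forall>i. 0 < r1 i" using rpos by (simp add: r1_def)
  then obtain t1 where t1: "\<forall>H\<in>C1. destroyer_wins H r1 t1"
    using assms(3) unfolding baker_class_def by blast
  have "\<forall>k. \<exists>t. \<forall>H\<in>C2. destroyer_wins H (\<lambda>i. r (i+k)) t"
    using assms(4) rpos unfolding baker_class_def by auto
  then obtain T where T: "\<And>k. \<forall>H\<in>C2. destroyer_wins H (\<lambda>i. r (i+k)) (T k)" by metis
  define N where "N = Max (T ` {..2*t1+1})"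
  have TN: "T k \<le> N" if "k \<le> 2*t1+1" for k
    unfolding N_def using that by (intro Max_ge) auto
  show "\<exists>t. \<forall>G\<in>oplus C1 C2. destroyer_wins G r t"
  proof (intro exI ballI)
    fix G assume "G \<in> oplus C1 C2"
    then obtain B where og: "ordered_graph G" and GB: "induce G B \<in> C1"
      and comps: "\<forall>C\<in>components_in G (verts G - B). induce G C \<in> C2 \<and> is_clique G (attach G B C) \<and>
          (\<forall>x\<in>attach G B C. \<forall>y\<in>C. x < y)"
      unfolding oplus_def by blast
    interpret BG G B
      using og comps comp_in by unfold_locales blast+
    have "destroyer_wins (induce G UNIV) r (2*t1+1+N)"
    proof (rule main)
      show "comp G B x \<subseteq> UNIV" for x by simp
      show "destroyer_wins (induce G (UNIV \<inter> B)) (\<lambda>j. r (2*j+1)) t1"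
        using t1 GB unfolding r1_def by simp
      fix k x assume k: "k \<le> 2*t1+1" and x: "x \<in> verts G - B"
      have "induce G (comp G B x) \<in> C2" using comps comp_in[OF x] by blast
      then show "destroyer_wins (induce G (comp G B x)) (\<lambda>i. r (i+k)) N"
        using T[of k] TN[OF k] dw_mono by blast
    qed
    then show "destroyer_wins G r (2*t1+1+N)" by (simp add: induce_UNIV)
  qed
qed

end
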